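(* The free energy $\mathcal{F}$ is lower semicontinuous in the weak $L^1$ topology: if $n=(n_A,n_B,n_C)$ and $n_k=(n_{k,A},n_{k,B},n_{k,C})$, $k=1,2,\dots$, are profiles such that for each $\alpha\in\{A,B,C\}$ the sequence $n_{k,\alpha}$ converges weakly in $L^1([0,1])$ to $n_\alpha$, then $\liminf_{k\to\infty}\mathcal{F}(\{n_k\})\ge\mathcal{F}(\{n\})$.
   Context: A profile is a triple $(n_A,n_B,n_C)$ of measurable functions on $[0,1]$ with values in $[0,1]$. A sequence $f_k\in L^1([0,1])$ converges weakly to $f$ if $\int_0^1f_k\phi\,dx\to\int_0^1f\phi\,dx$ for every bounded measurable $\phi$. For $\beta>0$ fixed, $\mathcal{F}(\{n\})=\beta\int_0^1dx\int_x^1dz\,[n_A(x)n_C(z)+n_B(x)n_A(z)+n_C(x)n_B(z)]+\int_0^1\sum_{\alpha}n_\alpha(x)\ln n_\alpha(x)\,dx$ with $0\ln0=0$. *)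

theory Defs
  imports "HOL-Analysis.Analysis"
begin

datatype species = A | B | C

abbreviation I01 :: "real measure" where
  "I01 \<equiv> lebesgue_on {0..1}"

definition profile :: "(species \<Rightarrow> real \<Rightarrow> real) \<Rightarrow> bool" where
  "profile n \<longleftrightarrow> (\<forall>a. n a \<in> borel_measurable I01 \<and> (\<forall>x\<in>{0..1}. 0 \<le> n a x \<and> n a x \<le> 1))"

definition weak_L1_conv :: "(nat \<Rightarrow> real \<Rightarrow> real) \<Rightarrow> (real \<Rightarrow> real) \<Rightarrow> bool" where
  "weak_L1_conv fk f \<longleftrightarrow>
     (\<forall>\<phi>. \<phi> \<in> borel_measurable I01 \<and> (\<exists>M. \<forall>x\<in>{0..1}. \<bar>\<phi> x\<bar> \<le> M) \<longrightarrow>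
        (\<lambda>k. integral\<^sup>L I01 (\<lambda>x. fk k x * \<phi> x)) \<longlonglongrightarrow> integral\<^sup>L I01 (\<lambda>x. f x * \<phi> x))"

text \<open>Free energy. Note ln 0 = 0 in Isabelle, so 0 * ln 0 = 0 as required.\<close>
definition free_energy :: "real \<Rightarrow> (species \<Rightarrow> real \<Rightarrow> real) \<Rightarrow> real" where
  "free_energy \<beta> n =
     \<beta> * (\<integral>x. (\<integral>z. indicator {x..1} z *
              (n A x * n C z + n B x * n A z + n C x * n B z) \<partial>I01) \<partial>I01)
     + (\<integral>x. (\<Sum>a\<in>UNIV. n a x * ln (n a x)) \<partial>I01)"

end

theory Submission
  imports Defs
begin

definition Gt :: "(real \<Rightarrow> real) \<Rightarrow> real \<Rightarrow> real" where
  "Gt f x = (\<integral>z. indicator {x..1} z * f z \<partial>I01)"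

definition bdd01 :: "(real \<Rightarrow> real) \<Rightarrow> bool" where
  "bdd01 f \<longleftrightarrow> f \<in> borel_measurable I01 \<and> (\<forall>x\<in>{0..1}. 0 \<le> f x \<and> f x \<le> 1)"

lemma fin: "finite_measure I01"
  by (rule finite_measure_lebesgue_on) (rule lmeasurable_interval)

lemma ident_meas[measurable]: "(\<lambda>x. x) \<in> borel_measurable (lebesgue_on S)"
  using id_borel_measurable_lebesgue_on by (simp add: id_def)

lemma int_bdd:
  fixes M :: real
  assumes "f \<in> borel_measurable I01" "\<forall>x\<in>{0..1}. \<bar>f x\<bar> \<le> M"
  shows "integrable I01 f"
  by (rule finite_measure.integrable_const_bound[OF fin, where B=M]) (use assms in auto)

lemma meas_from_borel: "(f::real\<Rightarrow>real) \<in> borel_measurable borel \<Longrightarrow> f \<in> borel_measurable I01"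
  using measurable_comp[OF id_borel_measurable_lebesgue_on, of f] by (simp add: comp_def)

lemma measure_I01: "measure I01 {0..1} = 1"
  by (simp add: measure_restrict_space)

lemma integral_const_I01: "(\<integral>x. c \<partial>I01) = (c::real)"
  using measure_I01 by simp

lemma Gt_int:
  assumes "bdd01 f" shows "integrable I01 (\<lambda>z. indicator {x..1} z * f z)"
  using assms unfolding bdd01_def by (intro int_bdd[where M=1]) (auto simp: indicator_def)

lemma Gt_bounds:
  assumes "bdd01 f" shows "0 \<le> Gt f x \<and> Gt f x \<le> 1"
proof
  show "0 \<le> Gt f x" unfolding Gt_def using assms unfolding bdd01_def
    by (intro Bochner_Integration.integral_nonneg) (auto simp: indicator_def)
  have "Gt f x \<le> (\<integral>z. 1 \<partial>I01)" unfolding Gt_def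
    using assms unfolding bdd01_def
    by (intro integral_mono Gt_int assms) (auto simp: indicator_def)
  then show "Gt f x \<le> 1" using measure_I01 by simp
qed

lemma Gt_anti:
  assumes "bdd01 f" "x \<le> y" shows "Gt f y \<le> Gt f x"
  unfolding Gt_def using assms unfolding bdd01_def
  by (intro integral_mono Gt_int assms) (auto simp: indicator_def)

lemma Gt_meas:
  assumes "bdd01 f" shows "Gt f \<in> borel_measurable I01"
proof -
  have "mono (\<lambda>x. - Gt f x)" using Gt_anti[OF assms] by (auto simp: mono_def)
  then have "(\<lambda>x. - Gt f x) \<in> borel_measurable borel" by (rule borel_measurable_mono)
  then have "(\<lambda>x. - (- Gt f x)) \<in> borel_measurable borel" by measurable
  then show ?thesis by (intro meas_from_borel) simp
qed

lemma Gt_conv: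
  assumes "weak_L1_conv fk f"
  shows "(\<lambda>k. Gt (fk k) x) \<longlonglongrightarrow> Gt f x"
proof -
  have m: "indicator {x..1::real} \<in> borel_measurable I01" by measurable
  have b: "\<exists>M. \<forall>y\<in>{0..1}. \<bar>indicator {x..1::real} y\<bar> \<le> (M::real)"
    by (rule exI[of _ 1]) (auto simp: indicator_def)
  from assms m b have "(\<lambda>k. integral\<^sup>L I01 (\<lambda>y. fk k y * indicator {x..1} y)) \<longlonglongrightarrow> integral\<^sup>L I01 (\<lambda>y. f y * indicator {x..1} y)"
    unfolding weak_L1_conv_def by blast
  then show ?thesis unfolding Gt_def by (simp add: mult.commute)
qed



lemma prod_meas_int:
  assumes "bdd01 p" "bdd01 q"
  shows "(\<lambda>x. p x * Gt q x) \<in> borel_measurable I01" "integrable I01 (\<lambda>x. p x * Gt q x)"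
proof -
  show m: "(\<lambda>x. p x * Gt q x) \<in> borel_measurable I01"
    using assms Gt_meas unfolding bdd01_def by (intro borel_measurable_times) auto
  show "integrable I01 (\<lambda>x. p x * Gt q x)"
  proof (rule int_bdd[OF m, where M=1], intro ballI)
    fix x :: real assume "x \<in> {0..1}"
    then have "0 \<le> p x" "p x \<le> 1" using assms(1) unfolding bdd01_def by auto
    moreover have "0 \<le> Gt q x" "Gt q x \<le> 1" using Gt_bounds[OF assms(2)] by auto
    ultimately show "\<bar>p x * Gt q x\<bar> \<le> 1" by (simp add: abs_mult mult_le_one)
  qed
qed

lemma pair_conv:
  assumes p: "\<And>k. bdd01 (p k)" "bdd01 p0" and q: "\<And>k. bdd01 (q k)" "bdd01 q0"
    and wp: "weak_L1_conv p p0" and wq: "weak_L1_conv q q0"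
  shows "(\<lambda>k. \<integral>x. p k x * Gt (q k) x \<partial>I01) \<longlonglongrightarrow> (\<integral>x. p0 x * Gt q0 x \<partial>I01)"
proof -
  have b: "\<exists>M. \<forall>x\<in>{0..1}. \<bar>Gt q0 x\<bar> \<le> (M::real)"
    using Gt_bounds[OF q(2)] by (intro exI[of _ 1]) auto
  have 1: "(\<lambda>k. \<integral>x. p k x * Gt q0 x \<partial>I01) \<longlonglongrightarrow> (\<integral>x. p0 x * Gt q0 x \<partial>I01)"
    using wp Gt_meas[OF q(2)] b unfolding weak_L1_conv_def by blast
  have 2: "(\<lambda>k. \<integral>x. p k x * (Gt (q k) x - Gt q0 x) \<partial>I01) \<longlonglongrightarrow> (\<integral>x. 0 \<partial>I01)"
  proof (rule integral_dominated_convergence[where w="\<lambda>_. 2"])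
    show "(\<lambda>x. 0::real) \<in> borel_measurable I01" by simp
    show "(\<lambda>x. p k x * (Gt (q k) x - Gt q0 x)) \<in> borel_measurable I01" for k
      using p q Gt_meas unfolding bdd01_def by (intro borel_measurable_times borel_measurable_diff) auto
    show "integrable I01 (\<lambda>_. 2::real)" by simp
    show "AE x in I01. (\<lambda>k. p k x * (Gt (q k) x - Gt q0 x)) \<longlonglongrightarrow> 0"
    proof (rule AE_I2)
      fix x assume "x \<in> space I01"
      then have x: "x \<in> {0..1}" by simp
      have "(\<lambda>k. Gt (q k) x - Gt q0 x) \<longlonglongrightarrow> 0"
        using Gt_conv[OF wq, of x] by (simp add: LIM_zero)
      then show "(\<lambda>k. p k x * (Gt (q k) x - Gt q0 x)) \<longlonglongrightarrow> 0"
      proof (rule tendsto_0_le[where K=1], intro always_eventually allI)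
        fix k
        have "\<bar>p k x\<bar> \<le> 1" using p(1)[of k] x unfolding bdd01_def by auto
        then show "norm (p k x * (Gt (q k) x - Gt q0 x)) \<le> norm (Gt (q k) x - Gt q0 x) * 1"
          by (simp add: abs_mult mult_left_le_one_le)
      qed
    qed
    show "AE x in I01. norm (p k x * (Gt (q k) x - Gt q0 x)) \<le> 2" for k
    proof (rule AE_I2)
      fix x assume "x \<in> space I01"
      then have x: "x \<in> {0..1}" by simp
      have "\<bar>p k x\<bar> \<le> 1" using p(1)[of k] x unfolding bdd01_def by auto
      moreover have "\<bar>Gt (q k) x - Gt q0 x\<bar> \<le> 2"
        using Gt_bounds[OF q(1)[of k], of x] Gt_bounds[OF q(2), of x] by auto
      ultimately have "\<bar>p k x\<bar> * \<bar>Gt (q k) x - Gt q0 x\<bar> \<le> 1 * 2"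
        by (intro mult_mono) auto
      then show "norm (p k x * (Gt (q k) x - Gt q0 x)) \<le> 2" by (simp add: abs_mult)
    qed
  qed
  have eq: "(\<integral>x. p k x * Gt (q k) x \<partial>I01) = (\<integral>x. p k x * Gt q0 x \<partial>I01) + (\<integral>x. p k x * (Gt (q k) x - Gt q0 x) \<partial>I01)" for k
  proof -
    have "(\<integral>x. p k x * Gt (q k) x \<partial>I01) = (\<integral>x. p k x * Gt q0 x + p k x * (Gt (q k) x - Gt q0 x) \<partial>I01)"
      by (simp add: algebra_simps)
    also have "\<dots> = (\<integral>x. p k x * Gt q0 x \<partial>I01) + (\<integral>x. p k x * (Gt (q k) x - Gt q0 x) \<partial>I01)"
    proof (rule Bochner_Integration.integral_add)
      show "integrable I01 (\<lambda>x. p k x * Gt q0 x)" by (rule prod_meas_int(2)[OF p(1) q(2)])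
      have "integrable I01 (\<lambda>x. p k x * Gt (q k) x - p k x * Gt q0 x)"
        by (intro Bochner_Integration.integrable_diff prod_meas_int(2) p q)
      then show "integrable I01 (\<lambda>x. p k x * (Gt (q k) x - Gt q0 x))"
        by (simp add: algebra_simps)
    qed
    finally show ?thesis .
  qed
  show ?thesis using tendsto_add[OF 1 2] by (simp add: eq)
qed



lemma profile_bdd: "profile n \<Longrightarrow> bdd01 (n a)"
  unfolding profile_def bdd01_def by auto

lemma inner_eq:
  assumes "profile n"
  shows "(\<integral>z. indicator {x..1} z * (n A x * n C z + n B x * n A z + n C x * n B z) \<partial>I01)
     = n A x * Gt (n C) x + n B x * Gt (n A) x + n C x * Gt (n B) x"
proof -
  note i = Gt_int[OF profile_bdd[OF assms]]
  have "(\<integral>z. indicator {x..1} z * (n A x * n C z + n B x * n A z + n C x * n B z) \<partial>I01)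
     = (\<integral>z. n A x * (indicator {x..1} z * n C z) + n B x * (indicator {x..1} z * n A z) + n C x * (indicator {x..1} z * n B z) \<partial>I01)"
    by (simp add: algebra_simps)
  also have "\<dots> = (\<integral>z. n A x * (indicator {x..1} z * n C z) \<partial>I01) + (\<integral>z. n B x * (indicator {x..1} z * n A z) \<partial>I01) + (\<integral>z. n C x * (indicator {x..1} z * n B z) \<partial>I01)"
    using i by (simp add: Bochner_Integration.integral_add Bochner_Integration.integrable_add)
  also have "\<dots> = n A x * Gt (n C) x + n B x * Gt (n A) x + n C x * Gt (n B) x"
    unfolding Gt_def by simp
  finally show ?thesis .
qed

definition Pe :: "(species \<Rightarrow> real \<Rightarrow> real) \<Rightarrow> real" where
  "Pe n = (\<integral>x. n A x * Gt (n C) x \<partial>I01) + (\<integral>x. n B x * Gt (n A) x \<partial>I01) + (\<integral>x. n C x * Gt (n B) x \<partial>I01)"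

definition ent :: "(real \<Rightarrow> real) \<Rightarrow> real" where
  "ent f = (\<integral>x. f x * ln (f x) \<partial>I01)"

lemma xlnx_bound: "0 \<le> t \<Longrightarrow> t \<le> 1 \<Longrightarrow> \<bar>t * ln t\<bar> \<le> (1::real)"
proof (cases "t = 0")
  case False
  assume t: "0 \<le> t" "t \<le> 1"
  then have tp: "0 < t" using False by simp
  have "ln t \<le> 0" using t tp by simp
  then have u: "t * ln t \<le> 0" using t by (simp add: mult_nonneg_nonpos)
  have "ln (1/t) \<le> 1/t - 1" using tp by (intro ln_le_minus_one) simp
  then have "- ln t \<le> 1/t - 1" using tp by (simp add: ln_div)
  then have "t * (- ln t) \<le> t * (1/t - 1)" using tp by (intro mult_left_mono) auto
  then have "- (t * ln t) \<le> 1 - t" using tp by (simp add: algebra_simps)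
  then show ?thesis using u t by linarith
qed simp

lemma ent_int: "bdd01 f \<Longrightarrow> integrable I01 (\<lambda>x. f x * ln (f x))"
  unfolding bdd01_def by (intro int_bdd[where M=1]) (auto intro: xlnx_bound)

lemma free_energy_eq:
  assumes "profile n"
  shows "free_energy \<beta> n = \<beta> * Pe n + (ent (n A) + ent (n B) + ent (n C))"
proof -
  have U: "(UNIV :: species set) = {A, B, C}"
    by (auto intro: species.exhaust)
  note b = profile_bdd[OF assms]
  have e1: "(\<integral>x. (\<integral>z. indicator {x..1} z * (n A x * n C z + n B x * n A z + n C x * n B z) \<partial>I01) \<partial>I01)
     = (\<integral>x. n A x * Gt (n C) x + n B x * Gt (n A) x + n C x * Gt (n B) x \<partial>I01)"
    by (simp add: inner_eq[OF assms])
  also have "\<dots> = Pe n" unfolding Pe_def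
    using prod_meas_int(2)[OF b b]
    by (simp add: Bochner_Integration.integral_add Bochner_Integration.integrable_add)
  finally have E: "(\<integral>x. (\<integral>z. indicator {x..1} z * (n A x * n C z + n B x * n A z + n C x * n B z) \<partial>I01) \<partial>I01) = Pe n" .
  have S: "(\<integral>x. (\<Sum>a\<in>UNIV. n a x * ln (n a x)) \<partial>I01) = ent (n A) + ent (n B) + ent (n C)"
    unfolding U ent_def using ent_int[OF b]
    by (simp add: Bochner_Integration.integral_add Bochner_Integration.integrable_add add.assoc)
  show ?thesis unfolding free_energy_def E S ..
qed



lemma tangent: "0 \<le> t \<Longrightarrow> 0 < s \<Longrightarrow> t * (ln s + 1) - s \<le> t * ln (t::real)"
proof (cases "t = 0")
  case False
  assume t: "0 \<le> t" and s: "0 < s"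
  then have tp: "0 < t" using False by simp
  have "ln (s/t) \<le> s/t - 1" using tp s by (intro ln_le_minus_one) simp
  then have "ln s - ln t \<le> s/t - 1" using tp s by (simp add: ln_div)
  then have "t * (ln s - ln t) \<le> t * (s/t - 1)" using tp by (intro mult_left_mono) auto
  then show ?thesis using tp by (simp add: algebra_simps)
qed simp

lemma ent_lsc:
  assumes fk: "\<And>k. bdd01 (fk k)" and f: "bdd01 f" and w: "weak_L1_conv fk f" and e: "\<epsilon> > 0"
  shows "eventually (\<lambda>k. ent (fk k) > ent f - 2*\<epsilon>) sequentially"
proof -
  define h where "h x = ln (f x + \<epsilon>) + 1" for x
  have fm[measurable]: "f \<in> borel_measurable I01" using f unfolding bdd01_def by auto
  have hm[measurable]: "h \<in> borel_measurable I01" unfolding h_def by measurable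
  define M where "M = \<bar>ln \<epsilon>\<bar> + \<epsilon> + 1"
  have hb: "\<bar>h x\<bar> \<le> M" if x: "x \<in> {0..1}" for x
  proof -
    have "0 \<le> f x" "f x \<le> 1" using f x unfolding bdd01_def by auto
    then have s1: "\<epsilon> \<le> f x + \<epsilon>" "0 < f x + \<epsilon>" using e by auto
    then have "ln \<epsilon> \<le> ln (f x + \<epsilon>)" using e by simp
    moreover have "ln (f x + \<epsilon>) \<le> f x + \<epsilon> - 1" using s1 by (intro ln_le_minus_one)
    ultimately show ?thesis unfolding h_def M_def abs_le_iff
      using \<open>f x \<le> 1\<close> abs_ge_minus_self[of "ln \<epsilon>"] abs_ge_self[of "ln \<epsilon>"] e by linarith
  qed
  have bM: "\<exists>M. \<forall>x\<in>{0..1}. \<bar>h x\<bar> \<le> (M::real)" using hb by blast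
  have lim: "(\<lambda>k. \<integral>x. fk k x * h x \<partial>I01) \<longlonglongrightarrow> (\<integral>x. f x * h x \<partial>I01)"
    using w hm bM unfolding weak_L1_conv_def by blast
  have intfk: "integrable I01 (\<lambda>x. fk k x * h x)" for k
  proof (rule int_bdd[where M=M])
    have "fk k \<in> borel_measurable I01" using fk[of k] unfolding bdd01_def by auto
    then show "(\<lambda>x. fk k x * h x) \<in> borel_measurable I01" using hm by (rule borel_measurable_times)
    show "\<forall>x\<in>{0..1}. \<bar>fk k x * h x\<bar> \<le> M"
    proof
      fix x :: real assume x: "x \<in> {0..1}"
      have "\<bar>fk k x\<bar> \<le> 1" using fk[of k] x unfolding bdd01_def by auto
      then have "\<bar>fk k x\<bar> * \<bar>h x\<bar> \<le> 1 * M" using hb[OF x] by (intro mult_mono) auto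
      then show "\<bar>fk k x * h x\<bar> \<le> M" by (simp add: abs_mult)
    qed
  qed
  have intf: "integrable I01 (\<lambda>x. f x * h x)"
  proof (rule int_bdd[where M=M])
    show "(\<lambda>x. f x * h x) \<in> borel_measurable I01" by measurable
    show "\<forall>x\<in>{0..1}. \<bar>f x * h x\<bar> \<le> M"
    proof
      fix x :: real assume x: "x \<in> {0..1}"
      have "\<bar>f x\<bar> \<le> 1" using f x unfolding bdd01_def by auto
      then have "\<bar>f x\<bar> * \<bar>h x\<bar> \<le> 1 * M" using hb[OF x] by (intro mult_mono) auto
      then show "\<bar>f x * h x\<bar> \<le> M" by (simp add: abs_mult)
    qed
  qed
  have intg: "integrable I01 (\<lambda>x. f x + \<epsilon>)"
    using f unfolding bdd01_def by (intro Bochner_Integration.integrable_add) (auto intro: int_bdd[where M=1])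
  have lower: "(\<integral>x. fk k x * h x \<partial>I01) - (\<integral>x. f x + \<epsilon> \<partial>I01) \<le> ent (fk k)" for k
  proof -
    have "(\<integral>x. fk k x * h x \<partial>I01) - (\<integral>x. f x + \<epsilon> \<partial>I01) = (\<integral>x. fk k x * h x - (f x + \<epsilon>) \<partial>I01)"
      using intfk intg by simp
    also have "\<dots> \<le> ent (fk k)" unfolding ent_def
    proof (rule integral_mono)
      show "integrable I01 (\<lambda>x. fk k x * h x - (f x + \<epsilon>))" using intfk intg by simp
      show "integrable I01 (\<lambda>x. fk k x * ln (fk k x))" by (rule ent_int[OF fk])
      fix x assume "x \<in> space I01"
      then have x: "x \<in> {0..1}" by simp
      have "0 \<le> fk k x" using fk[of k] x unfolding bdd01_def by auto
      moreover have "0 \<le> f x" using f x unfolding bdd01_def by auto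
      then have "0 < f x + \<epsilon>" using e by linarith
      ultimately show "fk k x * h x - (f x + \<epsilon>) \<le> fk k x * ln (fk k x)"
        unfolding h_def by (rule tangent)
    qed
    finally show ?thesis .
  qed
  have Lb: "ent f - \<epsilon> \<le> (\<integral>x. f x * h x \<partial>I01) - (\<integral>x. f x + \<epsilon> \<partial>I01)"
  proof -
    have "ent f - \<epsilon> = (\<integral>x. f x * ln (f x) - \<epsilon> \<partial>I01)"
      unfolding ent_def using ent_int[OF f] measure_I01 by simp
    also have "\<dots> \<le> (\<integral>x. f x * h x - (f x + \<epsilon>) \<partial>I01)"
    proof (rule integral_mono)
      show "integrable I01 (\<lambda>x. f x * ln (f x) - \<epsilon>)" using ent_int[OF f] by simp
      show "integrable I01 (\<lambda>x. f x * h x - (f x + \<epsilon>))" using intf intg by simp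
      fix x assume "x \<in> space I01"
      then have x: "x \<in> {0..1}" by simp
      have f0: "0 \<le> f x" using f x unfolding bdd01_def by auto
      have "f x * ln (f x) \<le> f x * ln (f x + \<epsilon>)"
      proof (cases "f x = 0")
        case False
        then have "0 < f x" using f0 by simp
        then have "ln (f x) \<le> ln (f x + \<epsilon>)" using e by simp
        then show ?thesis using f0 by (rule mult_left_mono)
      qed simp
      then show "f x * ln (f x) - \<epsilon> \<le> f x * h x - (f x + \<epsilon>)"
        unfolding h_def by (simp add: algebra_simps)
    qed
    also have "\<dots> = (\<integral>x. f x * h x \<partial>I01) - (\<integral>x. f x + \<epsilon> \<partial>I01)"
      using intf intg by simp
    finally show ?thesis .
  qed
  have "eventually (\<lambda>k. (\<integral>x. f x * h x \<partial>I01) - \<epsilon> < (\<integral>x. fk k x * h x \<partial>I01)) sequentially"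
    using lim e by (intro order_tendstoD(1)) auto
  then show ?thesis
  proof (rule eventually_mono)
    fix k assume "(\<integral>x. f x * h x \<partial>I01) - \<epsilon> < (\<integral>x. fk k x * h x \<partial>I01)"
    then show "ent f - 2 * \<epsilon> < ent (fk k)" using lower[of k] Lb by linarith
  qed
qed

lemma liminf_bound:
  assumes "\<And>\<delta>. \<delta> > 0 \<Longrightarrow> eventually (\<lambda>k. x k > c - \<delta>) sequentially"
  shows "ereal c \<le> liminf (\<lambda>k. ereal (x k))"
  unfolding le_Liminf_iff
proof (intro allI impI)
  fix y assume y: "y < ereal c"
  show "eventually (\<lambda>k. y < ereal (x k)) sequentially"
  proof (cases y)
    case (real r)
    then have "r < c" using y by simp
    then have "eventually (\<lambda>k. x k > c - (c - r)) sequentially" by (intro assms) simp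
    then show ?thesis by eventually_elim (simp add: real)
  next
    case MInf then show ?thesis by simp
  next
    case PInf then show ?thesis using y by simp
  qed
qed


theorem lemma10p1:
  fixes \<beta> :: real and n :: "species \<Rightarrow> real \<Rightarrow> real"
    and nk :: "nat \<Rightarrow> species \<Rightarrow> real \<Rightarrow> real"
  assumes "\<beta> > 0"
    and "profile n"
    and "\<And>k. profile (nk k)"
    and "\<And>a. weak_L1_conv (\<lambda>k. nk k a) (n a)"
  shows "liminf (\<lambda>k. ereal (free_energy \<beta> (nk k))) \<ge> ereal (free_energy \<beta> n)"
proof -
  have bn: "\<And>a. bdd01 (n a)" using assms(2) by (rule profile_bdd)
  have bk: "\<And>k a. bdd01 (nk k a)" using assms(3) by (rule profile_bdd)
  have P: "(\<lambda>k. Pe (nk k)) \<longlonglongrightarrow> Pe n" unfolding Pe_def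
    by (intro tendsto_add pair_conv bn bk assms(4))
  then have P': "(\<lambda>k. \<beta> * Pe (nk k)) \<longlonglongrightarrow> \<beta> * Pe n" by (intro tendsto_mult_left)
  show ?thesis
    unfolding free_energy_eq[OF assms(2)] free_energy_eq[OF assms(3)]
  proof (rule liminf_bound)
    fix \<delta> :: real assume d: "\<delta> > 0"
    have e1: "eventually (\<lambda>k. \<beta> * Pe (nk k) > \<beta> * Pe n - \<delta>/4) sequentially"
      using P' d by (intro order_tendstoD(1)) auto
    have e2: "eventually (\<lambda>k. ent (nk k a) > ent (n a) - 2*(\<delta>/8)) sequentially" for a
      using d by (intro ent_lsc[where fk="\<lambda>k. nk k a"] bk bn assms(4)) auto
    show "eventually (\<lambda>k. \<beta> * Pe (nk k) + (ent (nk k A) + ent (nk k B) + ent (nk k C))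
            > \<beta> * Pe n + (ent (n A) + ent (n B) + ent (n C)) - \<delta>) sequentially"
      using e1 e2[of A] e2[of B] e2[of C]
      by eventually_elim linarith
  qed
qed

end
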